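(* Let $n=p_1^{\alpha_1}p_2^{\alpha_2}\cdots p_t^{\alpha_t}$ with primes $p_1<\cdots<p_t$, $t\ge1$, and all $\alpha_i\ge1$. Then $$\mathrm{IR}(X_n)\le\left(1+2\cdot\frac{p_1}{p_t}\cdot\frac{1}{p_1^{\alpha_1-1}p_2^{\alpha_2-1}\cdots p_t^{\alpha_t-1}}\right)\alpha(X_n).$$
   Context: $X_n$ is the graph on $\{0,\dots,n-1\}$ with $a,b$ adjacent iff $\gcd(a-b,n)=1$. $\alpha(G)$ is the independence number. A set $S$ is irredundant if every $v\in S$ has a private neighbor, i.e. a vertex in $N[v]\setminus N[S\setminus\{v\}]$ (closed neighborhoods); $\mathrm{IR}(G)$ is the maximum size of an irredundant set. *)

theory Defs
  imports Complex_Main "HOL-Computational_Algebra.Primes"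
begin

text \<open>The graph X_n on {0,...,n-1}: a, b adjacent iff gcd(a-b, n) = 1.
  For n \<ge> 2 this relation is irreflexive since gcd(0,n) = n.\<close>
definition Xadj :: "nat \<Rightarrow> nat \<Rightarrow> nat \<Rightarrow> bool" where
  "Xadj n a b \<longleftrightarrow> a < n \<and> b < n \<and> gcd (int a - int b) (int n) = 1"

definition Xverts :: "nat \<Rightarrow> nat set" where
  "Xverts n = {0..<n}"

definition closed_nbhd :: "nat \<Rightarrow> nat \<Rightarrow> nat set" where
  "closed_nbhd n v = {v} \<union> {u \<in> Xverts n. Xadj n v u}"

definition closed_nbhd_set :: "nat \<Rightarrow> nat set \<Rightarrow> nat set" where
  "closed_nbhd_set n S = (\<Union>v\<in>S. closed_nbhd n v)"

definition independent :: "nat \<Rightarrow> nat set \<Rightarrow> bool" where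
  "independent n S \<longleftrightarrow> S \<subseteq> Xverts n \<and> (\<forall>a\<in>S. \<forall>b\<in>S. \<not> Xadj n a b)"

definition irredundant :: "nat \<Rightarrow> nat set \<Rightarrow> bool" where
  "irredundant n S \<longleftrightarrow> S \<subseteq> Xverts n \<and>
     (\<forall>v\<in>S. closed_nbhd n v - closed_nbhd_set n (S - {v}) \<noteq> {})"

definition alpha_X :: "nat \<Rightarrow> nat" where
  "alpha_X n = Max (card ` {S. independent n S})"

definition IR_X :: "nat \<Rightarrow> nat" where
  "IR_X n = Max (card ` {S. irredundant n S})"

end

theory Submission
  imports Defs
begin

lemma cop_iff:
  assumes "n \<noteq> 0"
  shows "gcd x (int n) = 1 \<longleftrightarrow> (\<forall>p\<in>prime_factors n. \<not> int p dvd x)"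
proof
  assume g: "gcd x (int n) = 1"
  show "\<forall>p\<in>prime_factors n. \<not> int p dvd x"
  proof (intro ballI notI)
    fix p assume p: "p \<in> prime_factors n" and d: "int p dvd x"
    have "int p dvd int n" using p by auto
    with d have "int p dvd gcd x (int n)" by simp
    with g have "int p dvd 1" by simp
    moreover have "prime p" using p by auto
    ultimately show False by (simp add: prime_gt_1_nat)
  qed
next
  assume H: "\<forall>p\<in>prime_factors n. \<not> int p dvd x"
  show "gcd x (int n) = 1"
  proof (rule ccontr)
    assume ne: "gcd x (int n) \<noteq> 1"
    have "gcd x (int n) \<noteq> 0" using assms by simp
    then have "\<not> is_unit (gcd x (int n))" using ne by simp
    then obtain q where q: "prime q" "q dvd gcd x (int n)"
      using prime_divisor_exists \<open>gcd x (int n) \<noteq> 0\<close> by blast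
    have q0: "q > 0" using q(1) prime_gt_0_int by blast
    define p where "p = nat q"
    have pq: "int p = q" using q0 p_def by simp
    have "prime p" using q(1) pq prime_nat_iff_prime by (metis prime_int_nat_transfer p_def)
    moreover have "p dvd n" using q(2) pq by (metis dvd_gcdD2 int_dvd_int_iff)
    ultimately have "p \<in> prime_factors n" using assms by (simp add: prime_factorsI)
    with H q(2) pq show False by (metis dvd_gcdD1)
  qed
qed

lemma pf_ne: assumes "(n::nat) \<ge> 2" shows "prime_factors n \<noteq> {}"
proof -
  obtain p where "prime p" "p dvd n" using prime_factor_nat[of n] assms by auto
  then have "p \<in> prime_factors n" using assms by (simp add: prime_factorsI)
  then show ?thesis by blast
qed

lemma Xadj_self: "n \<ge> 2 \<Longrightarrow> \<not> Xadj n a a"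
  by (simp add: Xadj_def)

lemma small_cop:
  assumes n: "n \<ge> 2" and d0: "d \<noteq> 0" and dl: "\<bar>d\<bar> < int (Min (prime_factors n))"
  shows "gcd d (int n) = 1"
proof -
  have fin: "finite (prime_factors n)" by simp
  have "\<forall>p\<in>prime_factors n. \<not> int p dvd d"
  proof (intro ballI notI)
    fix p assume p: "p \<in> prime_factors n" and dv: "int p dvd d"
    have "Min (prime_factors n) \<le> p" using p fin by simp
    moreover have "int p \<le> \<bar>d\<bar>" using dvd_imp_le_int[OF d0 dv] by simp
    ultimately show False using dl by linarith
  qed
  then show ?thesis using cop_iff[of n d] n by simp
qed

lemma indep_bound:
  assumes n: "n \<ge> 2" and I: "independent n I"
  shows "card I * Min (prime_factors n) \<le> n"
proof -
  define p1 where "p1 = Min (prime_factors n)"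
  have IV: "I \<subseteq> {0..<n}" using I by (simp add: independent_def Xverts_def)
  have finI: "finite I" using IV finite_subset by blast
  define f where "f = (\<lambda>(i::nat, c::nat). (i + c) mod n)"
  have inj: "inj_on f (I \<times> {0..<p1})"
  proof (rule inj_onI)
    fix x y assume x: "x \<in> I \<times> {0..<p1}" and y: "y \<in> I \<times> {0..<p1}" and e: "f x = f y"
    obtain i c where xi: "x = (i, c)" by fastforce
    obtain i' c' where yi: "y = (i', c')" by fastforce
    have i: "i \<in> I" "c < p1" "i' \<in> I" "c' < p1" using x y xi yi by auto
    have e2: "(i + c) mod n = (i' + c') mod n" using e xi yi f_def by simp
    have "int (i + c) mod int n = int (i' + c') mod int n" using e2 by (metis of_nat_mod)
    then have dv: "int n dvd (int i - int i') - (int c' - int c)"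
      by (simp add: mod_eq_dvd_iff algebra_simps)
    show "x = y"
    proof (cases "i = i'")
      case True
      then have "int n dvd int c' - int c" using dv by (metis diff_self diff_0 dvd_minus_iff)
      moreover have "p1 \<le> n"
      proof -
        have "prime_factors n \<noteq> {}" using pf_ne[OF n] .
        then have "p1 \<in> prime_factors n" unfolding p1_def by simp
        then have "p1 dvd n" by auto
        then show ?thesis using n by (simp add: dvd_imp_le)
      qed
      ultimately have "c = c'"
      proof -
        assume d1: "int n dvd int c' - int c" and d2: "p1 \<le> n"
        show "c = c'"
        proof (rule ccontr)
          assume "c \<noteq> c'"
          then have "int c' - int c \<noteq> 0" by simp
          from dvd_imp_le_int[OF this d1] have "int n \<le> \<bar>int c' - int c\<bar>" by simp
          moreover have "\<bar>int c' - int c\<bar> < int p1" using i by auto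
          ultimately show False using d2 by linarith
        qed
      qed
      with True xi yi show ?thesis by simp
    next
      case False
      have "c \<noteq> c'"
      proof
        assume "c = c'"
        then have d1: "int n dvd int i - int i'" using dv by simp
        have "int i - int i' \<noteq> 0" using False by simp
        from dvd_imp_le_int[OF this d1] have "int n \<le> \<bar>int i - int i'\<bar>" by simp
        moreover have "i < n" "i' < n" using IV i by auto
        ultimately show False by linarith
      qed
      have gc: "gcd (int c' - int c) (int n) = 1"
        using small_cop[OF n, of "int c' - int c"] \<open>c \<noteq> c'\<close> i unfolding p1_def by auto
      have "gcd (int i - int i') (int n) = gcd (int c' - int c) (int n)"
      proof -
        obtain k where k: "(int i - int i') - (int c' - int c) = int n * k" using dv by blast
        have "int i - int i' = (int c' - int c) + k * int n" using k by (simp add: algebra_simps)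
        then show ?thesis using gcd_add_mult[of "int n" k "int c' - int c"] by (simp add: gcd.commute add.commute)
      qed
      then have "Xadj n i i'" using gc i IV by (auto simp: Xadj_def)
      then show ?thesis using I i False by (auto simp: independent_def)
    qed
  qed
  have "f ` (I \<times> {0..<p1}) \<subseteq> {0..<n}" using n by (auto simp: f_def)
  then have "card (I \<times> {0..<p1}) \<le> n"
    using card_inj_on_le[OF inj] by (metis card_atLeastLessThan diff_zero finite_atLeastLessThan)
  then show ?thesis by (simp add: card_cartesian_product p1_def)
qed

lemma p1_facts:
  fixes n :: nat
  assumes n: "n \<ge> 2"
  shows "Min (prime_factors n) \<in> prime_factors n" "prime (Min (prime_factors n))"
        "Min (prime_factors n) dvd n"
proof -
  show m: "Min (prime_factors n) \<in> prime_factors n" using pf_ne[OF n] by simp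
  then show "prime (Min (prime_factors n))" by auto
  from m show "Min (prime_factors n) dvd n" by auto
qed

lemma fin_indep: "finite {S. independent n S}"
  by (rule finite_subset[of _ "Pow {0..<n}"]) (auto simp: independent_def Xverts_def)

lemma fin_irr: "finite {S. irredundant n S}"
  by (rule finite_subset[of _ "Pow {0..<n}"]) (auto simp: irredundant_def Xverts_def)

lemma alpha_lower:
  assumes n: "n \<ge> 2"
  shows "n div Min (prime_factors n) \<le> alpha_X n"
proof -
  define p1 where "p1 = Min (prime_factors n)"
  have pp: "prime p1" "p1 dvd n" using p1_facts[OF n] unfolding p1_def by auto
  have p0: "p1 > 0" using pp(1) prime_gt_0_nat by blast
  define A where "A = (\<lambda>k. k * p1) ` {0..<n div p1}"
  have "inj_on (\<lambda>k. k * p1) {0..<n div p1}" using p0 by (auto simp: inj_on_def)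
  then have cA: "card A = n div p1" by (simp add: A_def card_image)
  have sub: "A \<subseteq> {0..<n}"
  proof
    fix x assume "x \<in> A"
    then obtain k where k: "k < n div p1" "x = k * p1" by (auto simp: A_def)
    have "k * p1 < (n div p1) * p1" using k p0 by simp
    also have "\<dots> = n" using pp(2) by simp
    finally show "x \<in> {0..<n}" using k by simp
  qed
  have ind: "independent n A"
    unfolding independent_def Xverts_def
  proof (intro conjI ballI)
    show "A \<subseteq> {0..<n}" by (rule sub)
    fix a b assume a: "a \<in> A" and b: "b \<in> A"
    obtain k where k: "a = k * p1" using a by (auto simp: A_def)
    obtain l where l: "b = l * p1" using b by (auto simp: A_def)
    have "int p1 dvd int a - int b" using k l by (simp add: algebra_simps)
    moreover have "int p1 dvd int n" using pp(2) by simp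
    ultimately have dg: "int p1 dvd gcd (int a - int b) (int n)" by simp
    have "p1 > 1" using pp(1) prime_gt_1_nat by blast
    have "gcd (int a - int b) (int n) \<noteq> 1"
    proof
      assume "gcd (int a - int b) (int n) = 1"
      with dg have "int p1 dvd 1" by metis
      then show False using \<open>p1 > 1\<close> by simp
    qed
    then show "\<not> Xadj n a b" by (simp add: Xadj_def)
  qed
  have "card A \<le> alpha_X n" unfolding alpha_X_def
    using ind fin_indep[of n] by (intro Max_ge) auto
  then show ?thesis using cA p1_def by simp
qed

lemma three_elems:
  assumes "finite A" "2 < card A"
  shows "\<exists>a b c. a \<in> A \<and> b \<in> A \<and> c \<in> A \<and> a \<noteq> b \<and> a \<noteq> c \<and> b \<noteq> c"
proof -
  obtain a where a: "a \<in> A" using assms by fastforce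
  have c1: "card (A - {a}) > 1" using assms a by (simp add: card_Diff_singleton)
  then have "A - {a} \<noteq> {}" by (metis card.empty not_less_zero)
  then obtain b where b: "b \<in> A - {a}" by blast
  have "card (A - {a} - {b}) > 0" using c1 b assms by (simp add: card_Diff_singleton)
  then have "A - {a} - {b} \<noteq> {}" by (metis card.empty less_irrefl)
  then obtain c where c: "c \<in> A - {a} - {b}" by blast
  show ?thesis using a b c by blast
qed

lemma Xadj_iff:
  assumes "n \<ge> 2"
  shows "Xadj n a b \<longleftrightarrow> a < n \<and> b < n \<and> (\<forall>p\<in>prime_factors n. \<not> int p dvd (int a - int b))"
  using cop_iff[of n "int a - int b"] assms by (auto simp: Xadj_def)

lemma irr_bound:
  assumes n: "n \<ge> 2" and S: "irredundant n S"
  shows "card S \<le> n div Min (prime_factors n)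
           + 2 * (\<Prod>(prime_factors n - {Max (prime_factors n)}))"
proof -
  define P where "P = prime_factors n"
  define p1 where "p1 = Min P"
  define q where "q = Max P"
  define R where "R = \<Prod>(P - {q})"
  have finP: "finite P" by (simp add: P_def)
  have qP: "q \<in> P" using pf_ne[OF n] finP unfolding q_def P_def by simp
  have p0: "p1 > 0" using p1_facts[OF n] unfolding p1_def P_def using prime_gt_0_nat by blast
  have R0: "R > 0" unfolding R_def
    by (rule prod_pos) (auto simp: P_def intro: prime_gt_0_nat)
  have pR: "int p dvd int R" if "p \<in> P" "p \<noteq> q" for p
  proof -
    have "p dvd R" unfolding R_def using that finP by (intro dvd_prodI) auto
    then show ?thesis by simp
  qed
  have SV: "S \<subseteq> {0..<n}" using S by (simp add: irredundant_def Xverts_def)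
  have finS: "finite S" using SV finite_subset by blast
  define I where "I = {v\<in>S. \<forall>u\<in>S. u \<noteq> v \<longrightarrow> \<not> Xadj n u v}"
  define J where "J = S - I"
  have indI: "independent n I"
    unfolding independent_def Xverts_def
  proof (intro conjI ballI)
    show "I \<subseteq> {0..<n}" using SV by (auto simp: I_def)
    fix a b assume a: "a \<in> I" and b: "b \<in> I"
    show "\<not> Xadj n a b"
    proof (cases "a = b")
      case True then show ?thesis using Xadj_self[OF n] by simp
    next
      case False then show ?thesis using a b by (auto simp: I_def)
    qed
  qed
  have cI: "card I \<le> n div p1"
  proof -
    have "card I * p1 \<le> n" using indep_bound[OF n indI] by (simp add: p1_def P_def)
    then show ?thesis using p0 by (simp add: less_eq_div_iff_mult_less_eq)
  qed
  have priv: "\<exists>z. Xadj n v z \<and> (\<forall>u\<in>S. u \<noteq> v \<longrightarrow> \<not> Xadj n u z)" if v: "v \<in> J" for v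
  proof -
    have vS: "v \<in> S" using v by (simp add: J_def)
    obtain u where u: "u \<in> S" "u \<noteq> v" "Xadj n u v" using v by (auto simp: J_def I_def)
    obtain z where z: "z \<in> closed_nbhd n v" "z \<notin> closed_nbhd_set n (S - {v})"
      using S vS unfolding irredundant_def by blast
    have zn: "\<And>u'. u' \<in> S \<Longrightarrow> u' \<noteq> v \<Longrightarrow> z \<notin> closed_nbhd n u'"
      using z(2) by (auto simp: closed_nbhd_set_def)
    have "v \<in> closed_nbhd n u" using u by (auto simp: closed_nbhd_def Xverts_def Xadj_def)
    then have "z \<noteq> v" using zn[OF u(1) u(2)] by auto
    then have zv: "Xadj n v z" and zX: "z \<in> Xverts n" using z(1) by (auto simp: closed_nbhd_def)
    show ?thesis
    proof (intro exI conjI ballI impI)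
      show "Xadj n v z" by (rule zv)
      fix u' assume "u' \<in> S" "u' \<noteq> v"
      from zn[OF this] zX show "\<not> Xadj n u' z" by (auto simp: closed_nbhd_def)
    qed
  qed
  have JS: "J \<subseteq> S" by (auto simp: J_def)
  have Jn: "\<And>x. x \<in> J \<Longrightarrow> x < n" using JS SV by auto
  define F where "F = (\<lambda>k. {v\<in>J. v mod R = k})"
  have fib: "card (F k) \<le> 2" for k
  proof (rule ccontr)
    assume "\<not> card (F k) \<le> 2"
    moreover have "finite (F k)" using finS JS by (auto simp: F_def intro: finite_subset)
    ultimately obtain u v v' where uvv: "u \<in> F k" "v \<in> F k" "v' \<in> F k" "u \<noteq> v" "u \<noteq> v'" "v \<noteq> v'"
      using three_elems by (metis not_le)
    have J3: "u \<in> J" "v \<in> J" "v' \<in> J" and m: "u mod R = k" "v mod R = k" "v' mod R = k"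
      using uvv by (auto simp: F_def)
    have S3: "u \<in> S" "v \<in> S" "v' \<in> S" using J3 JS by auto
    have dR: "int R dvd int u - int v" "int R dvd int u - int v'"
    proof -
      have "int u mod int R = int v mod int R" using m by (metis of_nat_mod)
      then show "int R dvd int u - int v" by (simp add: mod_eq_dvd_iff)
      have "int u mod int R = int v' mod int R" using m by (metis of_nat_mod)
      then show "int R dvd int u - int v'" by (simp add: mod_eq_dvd_iff)
    qed
    obtain w where w: "Xadj n v w" "\<forall>s\<in>S. s \<noteq> v \<longrightarrow> \<not> Xadj n s w" using priv[OF J3(2)] by blast
    obtain w' where w': "Xadj n v' w'" "\<forall>s\<in>S. s \<noteq> v' \<longrightarrow> \<not> Xadj n s w'" using priv[OF J3(3)] by blast
    have wn: "w < n" "w' < n" using w(1) w'(1) by (auto simp: Xadj_def)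
    have vw: "\<forall>p\<in>P. \<not> int p dvd (int v - int w)" using w(1) Xadj_iff[OF n] P_def by blast
    have v'w': "\<forall>p\<in>P. \<not> int p dvd (int v' - int w')" using w'(1) Xadj_iff[OF n] P_def by blast
    have quw: "int q dvd int u - int w"
    proof -
      have "\<not> Xadj n u w" using w(2) S3 uvv by auto
      then obtain p where p: "p \<in> P" "int p dvd int u - int w"
        using Xadj_iff[OF n, of u w] Jn[OF J3(1)] wn P_def by blast
      show ?thesis
      proof (cases "p = q")
        case True then show ?thesis using p by simp
      next
        case False
        have "int p dvd int u - int v" using pR[OF p(1) False] dR(1) by (rule dvd_trans)
        then have "int p dvd (int u - int w) - (int u - int v)" using p(2) by (rule dvd_diff[rotated])
        then have "int p dvd int v - int w" by simp
        then show ?thesis using vw p(1) by blast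
      qed
    qed
    have qv'w: "int q dvd int v' - int w"
    proof -
      have "\<not> Xadj n v' w" using w(2) S3 uvv by auto
      then obtain p where p: "p \<in> P" "int p dvd int v' - int w"
        using Xadj_iff[OF n, of v' w] Jn[OF J3(3)] wn P_def by blast
      show ?thesis
      proof (cases "p = q")
        case True then show ?thesis using p by simp
      next
        case False
        have h1: "int p dvd int u - int v" using pR[OF p(1) False] dR(1) by (rule dvd_trans)
        have h2: "int p dvd int u - int v'" using pR[OF p(1) False] dR(2) by (rule dvd_trans)
        have "int p dvd (int v' - int w) + (int u - int v') - (int u - int v)"
          by (rule dvd_diff[OF dvd_add[OF p(2) h2] h1])
        then have "int p dvd int v - int w" by (simp add: algebra_simps)
        then show ?thesis using vw p(1) by blast
      qed
    qed
    have uv': "\<forall>p\<in>P. int p dvd int u - int v'"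
    proof
      fix p assume p: "p \<in> P"
      show "int p dvd int u - int v'"
      proof (cases "p = q")
        case True
        have "int q dvd (int u - int w) - (int v' - int w)" using quw qv'w by (rule dvd_diff)
        then show ?thesis using True by simp
      next
        case False then show ?thesis using dvd_trans[OF pR[OF p False] dR(2)] by simp
      qed
    qed
    have "\<forall>p\<in>P. \<not> int p dvd (int u - int w')"
    proof (intro ballI notI)
      fix p assume p: "p \<in> P" and d: "int p dvd int u - int w'"
      have "int p dvd (int u - int w') - (int u - int v')" using dvd_diff[OF d bspec[OF uv' p]] .
      then have "int p dvd int v' - int w'" by simp
      then show False using v'w' p by blast
    qed
    then have "Xadj n u w'" using Xadj_iff[OF n, of u w'] Jn[OF J3(1)] wn P_def by blast
    moreover have "\<not> Xadj n u w'" using w'(2) S3 uvv by auto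
    ultimately show False by contradiction
  qed
  have cJ: "card J \<le> 2 * R"
  proof -
    define f where "f = (\<lambda>v. v mod R)"
    have Jeq: "J = (\<Union>k\<in>f ` J. F k)" by (auto simp: F_def f_def)
    have finJ: "finite J" using finS JS finite_subset by blast
    have "card J \<le> (\<Sum>k\<in>f ` J. card (F k))"
      by (subst Jeq) (rule card_UN_le, simp add: finJ)
    also have "\<dots> \<le> (\<Sum>k\<in>f ` J. 2)" by (rule sum_mono) (rule fib)
    also have "\<dots> = 2 * card (f ` J)" by simp
    also have "card (f ` J) \<le> card {0..<R}"
      by (rule card_mono) (auto simp: f_def R0)
    finally show ?thesis by simp
  qed
  have "card S = card I + card J"
    using finS by (simp add: J_def I_def card_Diff_subset card_mono)
  also have "\<dots> \<le> n div p1 + 2 * R" using cI cJ by simp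
  finally show ?thesis by (simp add: p1_def q_def R_def P_def)
qed

theorem corollary5p5:
  fixes n :: nat
  assumes "n \<ge> 2"
  shows "real (IR_X n) \<le>
    (1 + 2 * (real (Min (prime_factors n)) / real (Max (prime_factors n)))
           * (1 / real (\<Prod>p\<in>prime_factors n. p ^ (multiplicity p n - 1))))
    * real (alpha_X n)"
proof -
  note n = assms
  define P where "P = prime_factors n"
  define p1 where "p1 = Min P"
  define q where "q = Max P"
  define R where "R = \<Prod>(P - {q})"
  define M where "M = (\<Prod>p\<in>P. p ^ (multiplicity p n - 1))"
  have finP: "finite P" by (simp add: P_def)
  have qP: "q \<in> P" using pf_ne[OF n] finP unfolding q_def P_def by simp
  have pp: "prime p1" "p1 dvd n" using p1_facts[OF n] unfolding p1_def P_def by auto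
  have p0: "p1 > 0" using pp(1) prime_gt_0_nat by blast
  have q0: "q > 0" using qP by (auto simp: P_def intro: prime_gt_0_nat)
  have M0: "M > 0" unfolding M_def
    by (rule prod_pos) (auto simp: P_def intro: prime_gt_0_nat)
  have nfac: "n = M * (q * R)"
  proof -
    have "n = (\<Prod>p\<in>P. p ^ multiplicity p n)" using prod_prime_factors[of n] n by (simp add: P_def)
    also have "\<dots> = (\<Prod>p\<in>P. p ^ (multiplicity p n - 1) * p)"
    proof (rule prod.cong[OF refl])
      fix p assume "p \<in> P"
      then have "multiplicity p n > 0" by (simp add: P_def prime_factors_multiplicity)
      then show "p ^ multiplicity p n = p ^ (multiplicity p n - 1) * p"
      proof -
        obtain k where "multiplicity p n = Suc k" using \<open>multiplicity p n > 0\<close> gr0_implies_Suc by blast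
        then show ?thesis by simp
      qed
    qed
    also have "\<dots> = M * \<Prod>P" by (simp add: M_def prod.distrib)
    also have "\<Prod>P = q * R" unfolding R_def using prod.remove[OF finP qP, of "\<lambda>x. x"] by simp
    finally show ?thesis .
  qed
  have IRb: "IR_X n \<le> n div p1 + 2 * R"
    unfolding IR_X_def
  proof (rule Max.boundedI)
    show "finite (card ` {S. irredundant n S})" using fin_irr by simp
    have "irredundant n {}" by (simp add: irredundant_def)
    then show "card ` {S. irredundant n S} \<noteq> {}" by blast
    fix x assume "x \<in> card ` {S. irredundant n S}"
    then obtain S where "irredundant n S" "x = card S" by blast
    then show "x \<le> n div p1 + 2 * R" using irr_bound[OF n] by (simp add: p1_def q_def R_def P_def)
  qed
  have al: "real (n div p1) \<le> real (alpha_X n)" using alpha_lower[OF n] by (simp add: p1_def P_def)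
  have ndiv: "real (n div p1) = real n / real p1" using pp(2) by (simp add: real_of_nat_div)
  define c where "c = 1 + 2 * (real p1 / real q) * (1 / real M)"
  have c0: "c \<ge> 0" unfolding c_def by simp
  have "real (IR_X n) \<le> real n / real p1 + 2 * real R" using IRb ndiv by linarith
  also have "real n / real p1 + 2 * real R = c * (real n / real p1)"
  proof -
    have "real n = real M * (real q * real R)" using nfac by simp
    moreover have "real p1 > 0" "real q > 0" "real M > 0" using p0 q0 M0 by auto
    ultimately show ?thesis unfolding c_def
      by (simp add: divide_simps) (simp add: algebra_simps)
  qed
  also have "\<dots> \<le> c * real (alpha_X n)" using mult_left_mono[OF al c0] ndiv by simp
  finally show ?thesis by (simp add: c_def p1_def q_def M_def P_def)
qed

end
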